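(* Let $(W,S)$ be a dihedral Coxeter system (i.e. $|S|=2$). Let $u,v\in W$ with $u<v$, and let $R=\{\alpha_t\in\Phi^+:\ u\leq vt\lhd v\}$ and $R'=\{\alpha_t\in\Phi^+:\ u\lhd ut\leq v\}$. Then the intersections $R\cap\operatorname{Cone}(R')$ and $R'\cap\operatorname{Cone}(R)$ are non-empty.
   Context: $\Phi^+$ is the set of positive roots of the standard geometric representation; $t$ ranges over reflections $T=\{wsw^{-1}\}$ and $\alpha_t$ is the positive root of $t$. $\leq$ is Bruhat order, $\lhd$ its covering relation. $\operatorname{Cone}(A)$ is the set of finite nonnegative linear combinations of elements of $A$. *)

theory Defs
  imports "HOL-Analysis.Analysis" "HOL-Library.Extended_Nat"
begin

text \<open>Dihedral Coxeter system with S = {s1, s2} and m(s1,s2) = m (2 \<le> m \<le> \<infinity>),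
 realised through its standard geometric representation on V = R^2, where a vector
 (a, b) stands for a \<alpha>_s1 + b \<alpha>_s2. The standard geometric representation is
 faithful, so W is identified with the group of linear maps generated by s1, s2;
 group multiplication is composition. Generators are indexed by bool
 (True = s1, False = s2).\<close>

definition coxc :: "enat \<Rightarrow> real" where
  "coxc m = (case m of enat k \<Rightarrow> cos (pi / real k) | \<infinity> \<Rightarrow> 1)"

definition Bform :: "enat \<Rightarrow> real \<times> real \<Rightarrow> real \<times> real \<Rightarrow> real" where
  "Bform m x y = fst x * fst y + snd x * snd y - coxc m * (fst x * snd y + snd x * fst y)"

definition sroot :: "bool \<Rightarrow> real \<times> real" where
  "sroot b = (if b then (1, 0) else (0, 1))"

definition refl_along :: "enat \<Rightarrow> real \<times> real \<Rightarrow> (real \<times> real \<Rightarrow> real \<times> real)" where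
  "refl_along m \<beta> = (\<lambda>x. x - (2 * Bform m \<beta> x) *\<^sub>R \<beta>)"

definition gen :: "enat \<Rightarrow> bool \<Rightarrow> (real \<times> real \<Rightarrow> real \<times> real)" where
  "gen m b = refl_along m (sroot b)"

fun wd :: "enat \<Rightarrow> bool list \<Rightarrow> (real \<times> real \<Rightarrow> real \<times> real)" where
  "wd m [] = id"
| "wd m (b # bs) = gen m b \<circ> wd m bs"

definition Wgrp :: "enat \<Rightarrow> (real \<times> real \<Rightarrow> real \<times> real) set" where
  "Wgrp m = range (wd m)"

definition len :: "enat \<Rightarrow> (real \<times> real \<Rightarrow> real \<times> real) \<Rightarrow> nat" where
  "len m w = (LEAST n. \<exists>bs. length bs = n \<and> wd m bs = w)"

text \<open>Reflections T = {w s w^{-1}}; for w = wd bs, w^{-1} = wd (rev bs).\<close>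
definition Refls :: "enat \<Rightarrow> (real \<times> real \<Rightarrow> real \<times> real) set" where
  "Refls m = {wd m (bs @ [b] @ rev bs) | bs b. True}"

definition Roots :: "enat \<Rightarrow> (real \<times> real) set" where
  "Roots m = {wd m bs (sroot b) | bs b. True}"

definition PosRoots :: "enat \<Rightarrow> (real \<times> real) set" where
  "PosRoots m = {\<beta> \<in> Roots m. fst \<beta> \<ge> 0 \<and> snd \<beta> \<ge> 0}"

definition root_of :: "enat \<Rightarrow> (real \<times> real \<Rightarrow> real \<times> real) \<Rightarrow> real \<times> real" where
  "root_of m t = (THE \<beta>. \<beta> \<in> PosRoots m \<and> refl_along m \<beta> = t)"

definition bruhat_step :: "enat \<Rightarrow> (real \<times> real \<Rightarrow> real \<times> real) \<Rightarrow> (real \<times> real \<Rightarrow> real \<times> real) \<Rightarrow> bool" where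
  "bruhat_step m w w' = (w \<in> Wgrp m \<and> (\<exists>t \<in> Refls m. w' = w \<circ> t \<and> len m w < len m w'))"

definition bruhat_le :: "enat \<Rightarrow> (real \<times> real \<Rightarrow> real \<times> real) \<Rightarrow> (real \<times> real \<Rightarrow> real \<times> real) \<Rightarrow> bool" where
  "bruhat_le m u v = (u \<in> Wgrp m \<and> v \<in> Wgrp m \<and> (bruhat_step m)\<^sup>*\<^sup>* u v)"

definition bruhat_less :: "enat \<Rightarrow> (real \<times> real \<Rightarrow> real \<times> real) \<Rightarrow> (real \<times> real \<Rightarrow> real \<times> real) \<Rightarrow> bool" where
  "bruhat_less m u v = (bruhat_le m u v \<and> u \<noteq> v)"

definition bruhat_cover :: "enat \<Rightarrow> (real \<times> real \<Rightarrow> real \<times> real) \<Rightarrow> (real \<times> real \<Rightarrow> real \<times> real) \<Rightarrow> bool" where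
  "bruhat_cover m u v = (bruhat_less m u v \<and> \<not> (\<exists>w. bruhat_less m u w \<and> bruhat_less m w v))"

definition Cone :: "(real \<times> real) set \<Rightarrow> (real \<times> real) set" where
  "Cone A = {x. \<exists>F c. finite F \<and> F \<subseteq> A \<and> (\<forall>a\<in>F. c a \<ge> 0) \<and> x = (\<Sum>a\<in>F. c a *\<^sub>R a)}"

end

theory Submission
  imports Defs
begin

lemma wd_append: "wd m (xs @ ys) = wd m xs \<circ> wd m ys"
  by (induction xs) (auto simp: comp_assoc)

lemma gen_True: "gen m True (x, y) = (- x + 2 * coxc m * y, y)"
  by (simp add: gen_def refl_along_def sroot_def Bform_def algebra_simps)

lemma gen_False: "gen m False (x, y) = (x, 2 * coxc m * x - y)"
  by (simp add: gen_def refl_along_def sroot_def Bform_def algebra_simps)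

lemma gen_gen: "gen m b (gen m b z) = z"
  by (cases z; cases b) (simp_all add: gen_True gen_False)

lemma gen_gen_comp: "gen m b \<circ> gen m b = id"
  by (rule ext) (simp add: gen_gen)

lemma wd_rev_cancel: "wd m (xs @ rev xs) = id"
proof (induction xs)
  case Nil then show ?case by simp
next
  case (Cons x xs)
  have "wd m ((x # xs) @ rev (x # xs)) = gen m x \<circ> wd m (xs @ rev xs) \<circ> gen m x"
    by (simp add: wd_append comp_assoc)
  also have "\<dots> = id" by (metis Cons.IH comp_id gen_gen_comp)
  finally show ?case .
qed

lemma wd_rev_cancel2: "wd m (rev xs @ xs) = id"
  using wd_rev_cancel[of m "rev xs"] by simp

lemma wd_rev_cancel_app: "wd m xs (wd m (rev xs) z) = z"
  using fun_cong[OF wd_rev_cancel[of m xs], of z] by (simp add: wd_append)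

lemma wd_rev_cancel_app2: "wd m (rev xs) (wd m xs z) = z"
  using fun_cong[OF wd_rev_cancel2[of m xs], of z] by (simp add: wd_append)

lemma gen_add: "gen m b (x + y) = gen m b x + gen m b y"
  by (cases x; cases y; cases b) (simp_all add: gen_True gen_False algebra_simps)

lemma gen_scale: "gen m b (r *\<^sub>R x) = r *\<^sub>R gen m b x"
  by (cases x; cases b) (simp_all add: gen_True gen_False algebra_simps)

lemma gen_neg: "gen m b (- x) = - gen m b x"
  by (cases x; cases b) (simp_all add: gen_True gen_False algebra_simps)

lemma wd_add: "wd m bs (x + y) = wd m bs x + wd m bs y"
  by (induction bs) (simp_all add: gen_add)

lemma wd_scale: "wd m bs (r *\<^sub>R x) = r *\<^sub>R wd m bs x"
  by (induction bs) (simp_all add: gen_scale)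

lemma wd_neg: "wd m bs (- x) = - wd m bs x"
  by (induction bs) (simp_all add: gen_neg)

lemma wd_diff: "wd m bs (x - y) = wd m bs x - wd m bs y"
  using wd_add[of m bs x "- y"] wd_neg[of m bs y] by simp

lemma wd_lin: "wd m bs (x, y) = x *\<^sub>R wd m bs (1,0) + y *\<^sub>R wd m bs (0,1)"
proof -
  have "(x, y) = x *\<^sub>R (1,0) + y *\<^sub>R ((0,1)::real\<times>real)" by simp
  then show ?thesis by (metis wd_add wd_scale)
qed

lemma gen_sroot: "gen m b (sroot b) = - sroot b"
  by (cases b) (simp_all add: sroot_def gen_True gen_False)

fun alt :: "bool \<Rightarrow> nat \<Rightarrow> bool list" where
  "alt p 0 = []" | "alt p (Suc k) = p # alt (\<not> p) k"

definition nxt :: "bool \<Rightarrow> nat \<Rightarrow> bool" where "nxt p k = (if even k then p else \<not> p)"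

lemma length_alt[simp]: "length (alt p k) = k"
  by (induction k arbitrary: p) auto

lemma alt_Suc_snoc: "alt p (Suc k) = alt p k @ [nxt p k]"
proof (induction k arbitrary: p)
  case 0 then show ?case by (simp add: nxt_def)
next
  case (Suc k)
  have "alt p (Suc (Suc k)) = p # alt (\<not>p) (Suc k)" by simp
  also have "\<dots> = p # (alt (\<not>p) k @ [nxt (\<not>p) k])" by (simp only: Suc.IH)
  also have "\<dots> = alt p (Suc k) @ [nxt p (Suc k)]" by (simp add: nxt_def)
  finally show ?case .
qed

lemma alt_add: "alt p (i + j) = alt p i @ alt (nxt p i) j"
  by (induction i arbitrary: p) (auto simp: nxt_def)

lemma rev_alt: "rev (alt p k) = alt (if odd k then p else \<not> p) k"
proof (induction k arbitrary: p)
  case 0 then show ?case by simp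
next
  case (Suc k)
  have "rev (alt p (Suc k)) = alt (if odd k then \<not>p else p) k @ [p]"
    using Suc[of "\<not> p"] by simp
  also have "\<dots> = alt (if odd k then \<not>p else p) (Suc k)"
    by (subst alt_Suc_snoc) (simp add: nxt_def)
  finally show ?case by simp
qed

definition sw :: "bool \<Rightarrow> real \<times> real \<Rightarrow> real \<times> real" where
  "sw p z = (if p then z else (snd z, fst z))"

fun cheb :: "real \<Rightarrow> nat \<Rightarrow> real" where
  "cheb c 0 = 0" | "cheb c (Suc 0) = 1" | "cheb c (Suc (Suc k)) = 2 * c * cheb c (Suc k) - cheb c k"

lemma wd_alt_nxt: "wd m (alt p k) (sroot (nxt p k)) = sw p (cheb (coxc m) (Suc k), cheb (coxc m) k)"
proof (induction k arbitrary: p)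
  case 0 show ?case by (cases p) (simp_all add: nxt_def sroot_def sw_def)
next
  case (Suc k)
  have "nxt p (Suc k) = nxt (\<not>p) k" by (simp add: nxt_def)
  then show ?case using Suc[of "\<not>p"]
    by (cases p) (simp_all add: sw_def gen_True gen_False algebra_simps)
qed

lemma wd_alt_last: "wd m (alt p (Suc k)) (sroot (nxt p k)) = - sw p (cheb (coxc m) (Suc k), cheb (coxc m) k)"
  by (simp only: alt_Suc_snoc wd_append) (simp add: gen_sroot wd_neg wd_alt_nxt)



lemma cheb_sin: "cheb (cos t) k * sin t = sin (real k * t)"
proof (induction "cos t" k rule: cheb.induct)
  case 1 then show ?case by simp
next
  case 2 then show ?case by simp
next
  case (3 k)
  have e1: "sin (real (Suc (Suc k)) * t) = sin (real (Suc k) * t + t)" by (simp add: algebra_simps)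
  have e2: "sin (real k * t) = sin (real (Suc k) * t - t)" by (simp add: algebra_simps)
  have "cheb (cos t) (Suc (Suc k)) * sin t = 2 * cos t * (cheb (cos t) (Suc k) * sin t) - cheb (cos t) k * sin t"
    by (simp add: algebra_simps)
  also have "\<dots> = 2 * cos t * sin (real (Suc k) * t) - sin (real k * t)" using 3 by simp
  also have "\<dots> = sin (real (Suc (Suc k)) * t)"
    unfolding e1 e2 sin_add sin_diff by (simp add: algebra_simps)
  finally show ?case .
qed

lemma cheb_one: "cheb 1 k = real k"
  by (induction "1::real" k rule: cheb.induct) (simp_all add: algebra_simps)

lemma coxc_fin: "coxc (enat M) = cos (pi / real M)" by (simp add: coxc_def)
lemma coxc_inf: "coxc \<infinity> = 1" by (simp add: coxc_def)

lemma fin_setup: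
  assumes "2 \<le> M"
  shows "0 < sin (pi / real M)" "cheb (coxc (enat M)) k = sin (real k * (pi / real M)) / sin (pi / real M)"
proof -
  have "0 < pi / real M" using assms by simp
  moreover have "pi / real M < pi" using assms pi_gt_zero by (simp add: divide_less_eq)
  ultimately show s: "0 < sin (pi / real M)" by (rule sin_gt_zero)
  show "cheb (coxc (enat M)) k = sin (real k * (pi / real M)) / sin (pi / real M)"
    using cheb_sin[of "pi / real M" k] s by (simp add: coxc_fin field_simps)
qed

lemma sin_pos_k: assumes "0 < k" "k < M" shows "0 < sin (real k * (pi / real M))"
proof (rule sin_gt_zero)
  show "0 < real k * (pi / real M)" using assms by simp
  have "real k / real M < 1" using assms by simp
  then have "real k / real M * pi < 1 * pi" by (intro mult_strict_right_mono) auto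
  then show "real k * (pi / real M) < pi" by (simp add: field_simps)
qed

lemma sin_neg_k: assumes "M < k" "k < 2 * M" shows "sin (real k * (pi / real M)) < 0"
proof -
  have "0 < real (k - M) * (pi / real M)" using assms by simp
  moreover have "real (k - M) * (pi / real M) < pi" using sin_pos_k assms
  proof -
    have "real (k - M) / real M < 1" using assms by simp
    then have "real (k - M) / real M * pi < 1 * pi" by (intro mult_strict_right_mono) auto
    then show ?thesis by (simp add: field_simps)
  qed
  ultimately have "0 < sin (real (k - M) * (pi / real M))" by (rule sin_gt_zero)
  moreover have "real (k - M) * (pi / real M) = real k * (pi / real M) - pi"
    using assms by (simp add: of_nat_diff field_simps)
  ultimately show ?thesis by (simp add: sin_diff)
qed

lemma cheb_nonneg: assumes "2 \<le> m" "enat k \<le> m" shows "0 \<le> cheb (coxc m) k"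
proof (cases m)
  case (enat M)
  then have M: "2 \<le> M" "k \<le> M" using assms by auto
  note f = fin_setup[OF M(1)]
  show ?thesis
  proof (cases "k = 0 \<or> k = M")
    case True
    then show ?thesis
    proof
      assume "k = 0" then show ?thesis by simp
    next
      assume "k = M"
      then have "real k * (pi / real M) = pi" using M by simp
      then show ?thesis using f enat by simp
    qed
  next
    case False
    then have "0 < sin (real k * (pi / real M))" using M by (intro sin_pos_k) auto
    then show ?thesis using f enat by simp
  qed
next
  case infinity then show ?thesis by (simp add: coxc_inf cheb_one)
qed

lemma cheb_pos: assumes "2 \<le> m" "0 < k" "enat k < m" shows "0 < cheb (coxc m) k"
proof (cases m)
  case (enat M)
  then have M: "2 \<le> M" "k < M" using assms by auto
  note f = fin_setup[OF M(1)]
  have "0 < sin (real k * (pi / real M))" using M assms by (intro sin_pos_k) auto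
  then show ?thesis using f enat by simp
next
  case infinity then show ?thesis using assms by (simp add: coxc_inf cheb_one)
qed

lemma cheb_M: assumes "2 \<le> M"
  shows "cheb (coxc (enat M)) M = 0" "cheb (coxc (enat M)) (Suc M) = -1" "cheb (coxc (enat M)) (M - 1) = 1"
proof -
  note f = fin_setup[OF assms]
  have "real M * (pi / real M) = pi" using assms by simp
  then show "cheb (coxc (enat M)) M = 0" using f by simp
  have "real (Suc M) * (pi / real M) = pi + pi / real M" using assms by (simp add: field_simps)
  then show "cheb (coxc (enat M)) (Suc M) = -1" using f by (simp add: sin_add)
  have "real (M - 1) * (pi / real M) = pi - pi / real M" using assms by (simp add: of_nat_diff field_simps)
  then show "cheb (coxc (enat M)) (M - 1) = 1" using f by (simp add: sin_diff)
qed

lemma cheb_zero: assumes "2 \<le> m" "0 < j" "\<forall>M. m = enat M \<longrightarrow> j < 2 * M" "cheb (coxc m) j = 0"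
  shows "cheb (coxc m) (Suc j) = -1"
proof (cases m)
  case (enat M)
  then have M: "2 \<le> M" "j < 2 * M" using assms by auto
  note f = fin_setup[OF M(1)]
  have "j = M"
  proof (rule ccontr)
    assume "j \<noteq> M"
    then have "j < M \<or> M < j" by auto
    then have "sin (real j * (pi / real M)) \<noteq> 0"
      using sin_pos_k[of j M] sin_neg_k[of M j] M assms(2) by fastforce
    then show False using f assms(4) enat by simp
  qed
  then show ?thesis using cheb_M[OF M(1)] enat by simp
next
  case infinity then show ?thesis using assms by (simp add: coxc_inf cheb_one)
qed

lemma cheb_cas: "cheb c (Suc i) * cheb c (i + d) - cheb c i * cheb c (Suc (i + d)) = cheb c d"
proof (induction i)
  case 0 then show ?case by simp
next
  case (Suc i)
  have a: "cheb c (Suc (Suc i)) = 2 * c * cheb c (Suc i) - cheb c i" by simp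
  have b: "cheb c (Suc (Suc (i + d))) = 2 * c * cheb c (Suc (i + d)) - cheb c (i + d)" by simp
  show ?case using Suc by (simp only: add_Suc a b) (simp add: algebra_simps)
qed



lemma sw_eq_iff: "sw p x = sw p y \<longleftrightarrow> x = y"
  by (cases p) (auto simp: sw_def prod_eq_iff)

lemma sroot_sw: "sroot p = sw p (1, 0)" "sroot (\<not> p) = sw p (0, 1)"
  by (cases p; simp add: sroot_def sw_def)+

lemma wd_in_W[simp]: "wd m bs \<in> Wgrp m"
  by (simp add: Wgrp_def)

lemma len_ex: assumes "w \<in> Wgrp m" shows "\<exists>bs. length bs = len m w \<and> wd m bs = w"
proof -
  from assms obtain bs where "wd m bs = w" by (auto simp: Wgrp_def)
  then have "\<exists>n bs. length bs = n \<and> wd m bs = w" by blast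
  then show ?thesis unfolding len_def by (rule LeastI_ex)
qed

lemma len_le: "wd m bs = w \<Longrightarrow> len m w \<le> length bs"
  unfolding len_def by (rule Least_le) auto

lemma noadj_alt: "(\<forall>xs b ys. bs \<noteq> xs @ b # b # ys) \<Longrightarrow> bs = alt (hd bs) (length bs)"
proof (induction bs)
  case Nil then show ?case by simp
next
  case (Cons x rest)
  note P = Cons.prems
  have h: "\<forall>xs b ys. rest \<noteq> xs @ b # b # ys"
  proof (intro allI)
    fix xs b ys show "rest \<noteq> xs @ b # b # ys" using P[rule_format, of "x#xs" b ys] by auto
  qed
  with Cons.IH have r: "rest = alt (hd rest) (length rest)" by blast
  show ?case
  proof (cases rest)
    case Nil then show ?thesis by simp
  next
    case (Cons y zs)
    have "y \<noteq> x" using P[rule_format, of "[]" x zs] Cons by auto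
    then have "y = (\<not> x)" by auto
    then show ?thesis using r Cons by simp
  qed
qed

lemma len_alt: assumes "w \<in> Wgrp m" shows "\<exists>p. w = wd m (alt p (len m w))"
proof -
  obtain bs where bs: "length bs = len m w" "wd m bs = w" using len_ex[OF assms] by blast
  have "\<forall>xs b ys. bs \<noteq> xs @ b # b # ys"
  proof (intro allI notI)
    fix xs b ys assume "bs = xs @ b # b # ys"
    then have "wd m (xs @ ys) = w" using bs(2)
      by (simp add: wd_append fun_eq_iff gen_gen)
    then have "len m w \<le> length (xs @ ys)" by (rule len_le)
    then show False using bs(1) \<open>bs = xs @ b # b # ys\<close> by simp
  qed
  then have "bs = alt (hd bs) (length bs)" by (rule noadj_alt)
  then show ?thesis using bs by metis
qed

lemma wd_alt_M_10: assumes "2 \<le> M"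
  shows "wd (enat M) (alt p M) (1, 0) = (if even M then - (1, 0) else - (0, 1))"
    and "wd (enat M) (alt p M) (0, 1) = (if even M then - (0, 1) else - (1, 0))"
proof -
  obtain K where K: "M = Suc K" using assms by (cases M) auto
  have c: "cheb (coxc (enat M)) M = 0" "cheb (coxc (enat M)) (Suc M) = -1" "cheb (coxc (enat M)) K = 1"
    using cheb_M[OF assms] K by auto
  have A: "wd (enat M) (alt p M) (sroot (nxt p M)) = - sroot p"
    using wd_alt_nxt[of "enat M" p M] c by (cases p) (simp_all add: sw_def sroot_def)
  have B: "wd (enat M) (alt p M) (sroot (nxt p K)) = - sroot (\<not> p)"
    using wd_alt_last[of "enat M" p K] c K by (cases p) (simp_all add: sw_def sroot_def)
  have n1: "nxt p M = (if even M then p else \<not> p)" by (simp add: nxt_def)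
  have n2: "nxt p K = (if even M then \<not> p else p)" using K by (simp add: nxt_def)
  show "wd (enat M) (alt p M) (1, 0) = (if even M then - (1, 0) else - (0, 1))"
    using A B unfolding n1 n2 by (cases p; cases "even M") (simp_all add: sroot_def)
  show "wd (enat M) (alt p M) (0, 1) = (if even M then - (0, 1) else - (1, 0))"
    using A B unfolding n1 n2 by (cases p; cases "even M") (simp_all add: sroot_def)
qed

lemma braid: assumes "2 \<le> M" shows "wd (enat M) (alt p M) = wd (enat M) (alt q M)"
proof (rule ext)
  fix z :: "real \<times> real"
  obtain x y where z: "z = (x, y)" by (cases z)
  show "wd (enat M) (alt p M) z = wd (enat M) (alt q M) z"
    unfolding z by (subst (1 2) wd_lin) (simp add: wd_alt_M_10[OF assms])
qed

lemma len_bound: assumes "m = enat M" "2 \<le> M" "w \<in> Wgrp m" shows "len m w \<le> M"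
proof (rule ccontr)
  assume "\<not> len m w \<le> M"
  then obtain j where j: "len m w = Suc M + j" by (metis add_Suc less_imp_Suc_add not_le)
  obtain p where p: "w = wd m (alt p (len m w))" using len_alt[OF assms(3)] by blast
  obtain K where K: "M = Suc K" using assms by (cases M) auto
  have "wd m (alt p (Suc M)) = gen m p \<circ> wd m (alt (\<not>p) M)" by simp
  also have "\<dots> = gen m p \<circ> wd m (alt p M)" using braid[OF assms(2), of "\<not>p" p] assms(1) by simp
  also have "\<dots> = wd m (alt (\<not> p) K)" using K by (simp add: fun_eq_iff gen_gen)
  finally have e: "wd m (alt p (Suc M)) = wd m (alt (\<not> p) K)" .
  have "w = wd m (alt (\<not> p) K @ alt (nxt p (Suc M)) j)"
    using p j by (simp only: alt_add wd_append e)
  then have "len m w \<le> length (alt (\<not> p) K @ alt (nxt p (Suc M)) j)" by (intro len_le) simp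
  then have "len m w \<le> K + j" by simp
  then show False using j K by simp
qed

lemma len_bound_enat: assumes "2 \<le> m" "w \<in> Wgrp m" shows "enat (len m w) \<le> m"
  using assms len_bound by (cases m) (auto simp: numeral_eq_enat)

lemma F0: assumes "2 \<le> m" "0 < j" "\<forall>M. m = enat M \<longrightarrow> j < 2 * M"
  shows "wd m (alt r j) \<noteq> id"
proof
  assume idw: "wd m (alt r j) = id"
  obtain j' where j': "j = Suc j'" using assms by (cases j) auto
  let ?c = "cheb (coxc m)"
  have A: "sw r (?c (Suc j), ?c j) = sroot (nxt r j)"
    using wd_alt_nxt[of m r j] idw by simp
  have B: "- sw r (?c j, ?c j') = sroot (nxt r j')"
    using wd_alt_last[of m r j'] idw j' by (metis id_apply)
  show False
  proof (cases "even j")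
    case True
    then have "nxt r j = r" "nxt r j' = (\<not> r)" using j' by (auto simp: nxt_def)
    then have "?c (Suc j) = 1" "?c j = 0" using A by (cases r; simp add: sw_def sroot_def)+
    then show False using cheb_zero[OF assms] by simp
  next
    case False
    then have "nxt r j = (\<not> r)" "nxt r j' = r" using j' by (auto simp: nxt_def)
    then have "?c j = 1" "?c j = -1" using A B by (cases r; simp add: sw_def sroot_def)+
    then show False by simp
  qed
qed

lemma red: "n < k \<Longrightarrow> \<exists>r j. wd m (alt q n @ alt p k) = wd m (alt r j) \<and> k - n \<le> j \<and> j \<le> n + k"
proof (induction n arbitrary: q p k)
  case 0 then show ?case by auto
next
  case (Suc n)
  let ?x = "nxt q n"
  have s: "alt q (Suc n) @ alt p k = alt q n @ ([?x] @ alt p k)" by (simp only: alt_Suc_snoc append_assoc)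
  show ?case
  proof (cases "?x = p")
    case False
    then have "[?x] @ alt p k = alt ?x (Suc k)" by auto
    then have "alt q (Suc n) @ alt p k = alt q n @ alt ?x (Suc k)" using s by simp
    moreover have "n < Suc k" using Suc.prems by simp
    moreover obtain r j where "wd m (alt q n @ alt ?x (Suc k)) = wd m (alt r j) \<and> Suc k - n \<le> j \<and> j \<le> n + Suc k"
      using Suc.IH[where q=q and p="?x" and k="Suc k"] \<open>n < Suc k\<close> by blast
    ultimately show ?thesis by (intro exI[of _ r] exI[of _ j]) auto
  next
    case True
    obtain k' where k': "k = Suc k'" using Suc.prems by (cases k) auto
    have "wd m (alt q (Suc n) @ alt p k) = wd m (alt q n @ alt (\<not> p) k')"
      using s True k' by (simp add: wd_append fun_eq_iff gen_gen)
    moreover obtain r j where "wd m (alt q n @ alt (\<not>p) k') = wd m (alt r j) \<and> k' - n \<le> j \<and> j \<le> n + k'"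
      using Suc.IH[where q=q and p="\<not>p" and k=k'] Suc.prems k' by auto
    ultimately show ?thesis using k' by (intro exI[of _ r] exI[of _ j]) auto
  qed
qed

lemma len_wd_alt: assumes "2 \<le> m" "enat k \<le> m" shows "len m (wd m (alt p k)) = k"
proof (rule ccontr)
  assume ne: "len m (wd m (alt p k)) \<noteq> k"
  let ?w = "wd m (alt p k)"
  have "len m ?w \<le> k" using len_le[of m "alt p k"] by simp
  with ne have lt: "len m ?w < k" by simp
  obtain q where q: "?w = wd m (alt q (len m ?w))" using len_alt[of ?w m] by auto
  let ?n = "len m ?w"
  obtain q' where q': "rev (alt q ?n) = alt q' ?n" using rev_alt by blast
  have "wd m (rev (alt q ?n) @ alt p k) = id"
    using q wd_rev_cancel2[of m "alt q ?n"] by (simp add: wd_append)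
  then have "wd m (alt q' ?n @ alt p k) = id" using q' by simp
  moreover obtain r j where rj0: "wd m (alt q' ?n @ alt p k) = wd m (alt r j)" "k - ?n \<le> j" "j \<le> ?n + k"
    using red[OF lt, of m q' p] by auto
  ultimately have rj: "wd m (alt r j) = id" "k - ?n \<le> j" "j \<le> ?n + k" by auto
  have "\<forall>M. m = enat M \<longrightarrow> j < 2 * M" using assms(2) rj lt by auto
  moreover have "0 < j" using rj lt by simp
  ultimately show False using F0[OF assms(1)] rj(1) by blast
qed



lemma step_len: "bruhat_step m w w' \<Longrightarrow> len m w < len m w'"
  by (auto simp: bruhat_step_def)

lemma rt_len: "(bruhat_step m)\<^sup>*\<^sup>* u v \<Longrightarrow> u = v \<or> len m u < len m v"
proof (induction rule: rtranclp_induct)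
  case base then show ?case by simp
next
  case (step y z) then show ?case using step_len[of m y z] by auto
qed

lemma rt_one: assumes "(bruhat_step m)\<^sup>*\<^sup>* u v" "u \<noteq> v" "len m v \<le> Suc (len m u)"
  shows "bruhat_step m u v"
  using assms(1)
proof (cases rule: converse_rtranclpE)
  case base then show ?thesis using assms by simp
next
  case (step w)
  have "w = v \<or> len m w < len m v" using rt_len[OF step(2)] .
  moreover have "len m u < len m w" using step_len[OF step(1)] .
  ultimately show ?thesis using step assms(3) by auto
qed

lemma refl_invol: "t \<in> Refls m \<Longrightarrow> t \<circ> t = id"
proof -
  assume "t \<in> Refls m"
  then obtain bs b where t: "t = wd m (bs @ [b] @ rev bs)" by (auto simp: Refls_def)
  show "t \<circ> t = id"
  proof (rule ext)
    fix z show "(t \<circ> t) z = id z"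
      unfolding t by (simp add: wd_append wd_rev_cancel_app wd_rev_cancel_app2 gen_gen)
  qed
qed

lemma Refls_gen: "gen m b \<in> Refls m"
proof -
  have "gen m b = wd m ([] @ [b] @ rev [])" by simp
  then show ?thesis unfolding Refls_def by blast
qed

lemma Refls_wd: "wd m (bs @ [b] @ rev bs) \<in> Refls m"
  unfolding Refls_def by blast

lemma cover_lemma: assumes "x \<in> Wgrp m" "y \<in> Wgrp m" "t \<in> Refls m" "y = x \<circ> t" "len m y = Suc (len m x)"
  shows "bruhat_cover m x y"
proof -
  have st: "bruhat_step m x y" using assms by (auto simp: bruhat_step_def)
  have less: "bruhat_less m x y" using st assms by (auto simp: bruhat_less_def bruhat_le_def)
  have "\<not> (\<exists>w. bruhat_less m x w \<and> bruhat_less m w y)"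
  proof
    assume "\<exists>w. bruhat_less m x w \<and> bruhat_less m w y"
    then obtain w where "bruhat_less m x w" "bruhat_less m w y" by blast
    then have "len m x < len m w" "len m w < len m y"
      using rt_len[of m x w] rt_len[of m w y] by (auto simp: bruhat_less_def bruhat_le_def)
    then show False using assms(5) by simp
  qed
  then show ?thesis using less by (simp add: bruhat_cover_def)
qed

lemma chain: assumes "2 \<le> m" "enat (j + d) \<le> m"
  shows "(bruhat_step m)\<^sup>*\<^sup>* (wd m (alt p j)) (wd m (alt p (j + d)))"
  using assms(2)
proof (induction d)
  case 0 then show ?case by simp
next
  case (Suc d)
  have le1: "enat (j + d) \<le> m" by (rule order_trans[OF _ Suc.prems]) simp
  have "bruhat_step m (wd m (alt p (j + d))) (wd m (alt p (j + Suc d)))"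
    unfolding bruhat_step_def
  proof (intro conjI bexI)
    show "wd m (alt p (j + Suc d)) = wd m (alt p (j + d)) \<circ> gen m (nxt p (j + d))"
      by (simp only: add_Suc_right alt_Suc_snoc wd_append) simp
    show "len m (wd m (alt p (j + d))) < len m (wd m (alt p (j + Suc d)))"
      using len_wd_alt[OF assms(1) le1] len_wd_alt[OF assms(1) Suc.prems] by simp
  qed (auto simp: Refls_gen)
  then show ?case using Suc.IH[OF le1] by (rule rtranclp.rtrancl_into_rtrancl[rotated])
qed

lemma F2: assumes "2 \<le> m" "x \<in> Wgrp m" "len m x < k" "enat k \<le> m"
  shows "bruhat_le m x (wd m (alt q k))"
proof -
  obtain p where p: "x = wd m (alt p (len m x))" using len_alt[OF assms(2)] by blast
  obtain k' where k': "k = Suc k'" using assms(3) by (cases k) auto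
  have le': "enat k' \<le> m" by (rule order_trans[OF _ assms(4)]) (simp add: k')
  have c1: "(bruhat_step m)\<^sup>*\<^sup>* x (wd m (alt p k'))"
    using chain[OF assms(1), of "len m x" "k' - len m x" p] assms(3) k' le' p by simp
  have "(bruhat_step m)\<^sup>*\<^sup>* x (wd m (alt q k))"
  proof (cases "q = p")
    case True
    then show ?thesis using chain[OF assms(1), of "len m x" "k - len m x" p] assms(3,4) p by simp
  next
    case False
    let ?bs = "alt p k'"
    have "bruhat_step m (wd m ?bs) (wd m (alt q k))"
      unfolding bruhat_step_def
    proof (intro conjI bexI)
      show "wd m (alt q k) = wd m ?bs \<circ> wd m (rev ?bs @ [q] @ rev (rev ?bs))"
      proof (rule ext)
        fix z
        have "alt q k = q # ?bs" using k' False by (cases q; cases p) auto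
        then show "wd m (alt q k) z = (wd m ?bs \<circ> wd m (rev ?bs @ [q] @ rev (rev ?bs))) z"
          by (simp add: wd_append wd_rev_cancel_app)
      qed
      show "wd m (rev ?bs @ [q] @ rev (rev ?bs)) \<in> Refls m" by (rule Refls_wd)
      show "len m (wd m ?bs) < len m (wd m (alt q k))"
        using len_wd_alt[OF assms(1) le'] len_wd_alt[OF assms(1) assms(4)] k' by simp
    qed simp
    then show ?thesis by (rule rtranclp.rtrancl_into_rtrancl[OF c1])
  qed
  then show ?thesis using assms(2) by (simp add: bruhat_le_def)
qed

lemma rev_form: assumes "w \<in> Wgrp m" shows "\<exists>L. w = wd m (rev (alt L (len m w)))"
proof -
  obtain P where P: "w = wd m (alt P (len m w))" using len_alt[OF assms] by blast
  let ?k = "len m w"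
  have "rev (alt (if odd ?k then P else \<not> P) ?k) = alt P ?k" by (simp add: rev_alt)
  then show ?thesis using P by metis
qed

lemma rev_alt_ex: "\<exists>q. rev (alt p k) = alt q k" using rev_alt by blast

lemma len_wd_rev_alt: assumes "2 \<le> m" "enat k \<le> m" shows "len m (wd m (rev (alt p k))) = k"
  using rev_alt_ex[of p k] len_wd_alt[OF assms] by metis

lemma F2rev: assumes "2 \<le> m" "x \<in> Wgrp m" "len m x < k" "enat k \<le> m"
  shows "bruhat_le m x (wd m (rev (alt q k)))"
  using rev_alt_ex[of q k] F2[OF assms] by metis



lemma B_sym: "Bform m x y = Bform m y x"
  by (simp add: Bform_def algebra_simps)

lemma B_gen: "Bform m (gen m b x) (gen m b y) = Bform m x y"
  by (cases x; cases y; cases b) (simp_all add: Bform_def gen_True gen_False algebra_simps)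

lemma B_wd: "Bform m (wd m bs x) (wd m bs y) = Bform m x y"
  by (induction bs) (simp_all add: B_gen)

lemma B_sroot: "Bform m (sroot b) (sroot b) = 1"
  by (cases b) (simp_all add: Bform_def sroot_def)

lemma B_neg1: "Bform m (- z) x = - Bform m z x"
  by (simp add: Bform_def algebra_simps)

lemma B_neg2: "Bform m z (- x) = - Bform m z x"
  by (simp add: Bform_def algebra_simps)

lemma B_zero: "Bform m 0 x = 0"
  by (simp add: Bform_def)

lemma refl_conj: "refl_along m (wd m bs z) = wd m bs \<circ> refl_along m z \<circ> wd m (rev bs)"
proof (rule ext)
  fix x
  let ?y = "wd m (rev bs) x"
  have "(wd m bs \<circ> refl_along m z \<circ> wd m (rev bs)) x = wd m bs (?y - (2 * Bform m z ?y) *\<^sub>R z)"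
    by (simp add: refl_along_def)
  also have "\<dots> = x - (2 * Bform m z ?y) *\<^sub>R wd m bs z"
    by (simp add: wd_diff wd_scale wd_rev_cancel_app)
  also have "Bform m z ?y = Bform m (wd m bs z) x"
    using B_wd[of m bs z ?y] by (simp add: wd_rev_cancel_app)
  finally show "refl_along m (wd m bs z) x = (wd m bs \<circ> refl_along m z \<circ> wd m (rev bs)) x"
    by (simp add: refl_along_def)
qed

lemma refl_of_root: "refl_along m (wd m bs (sroot b)) = wd m (bs @ [b] @ rev bs)"
  by (simp add: refl_conj wd_append gen_def comp_assoc)

lemma refl_neg: "refl_along m (- z) = refl_along m z"
  by (rule ext) (simp add: refl_along_def B_neg1)

lemma root_of_eq:
  assumes t: "t = wd m (bs @ [b] @ rev bs)"
    and beta: "\<beta> = wd m bs (sroot b) \<or> \<beta> = - wd m bs (sroot b)"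
    and nn: "0 \<le> fst \<beta>" "0 \<le> snd \<beta>"
  shows "root_of m t = \<beta>"
  unfolding root_of_def
proof (rule the_equality)
  have r: "\<beta> \<in> Roots m"
  proof (cases "\<beta> = wd m bs (sroot b)")
    case True then show ?thesis unfolding Roots_def by blast
  next
    case False
    then have "\<beta> = wd m (bs @ [b]) (sroot b)" using beta by (simp add: wd_append gen_sroot wd_neg)
    then show ?thesis unfolding Roots_def by blast
  qed
  have rb: "refl_along m \<beta> = t"
    using beta t refl_of_root[of m bs b] refl_neg[of m "wd m bs (sroot b)"] by auto
  show "\<beta> \<in> PosRoots m \<and> refl_along m \<beta> = t" using r rb nn by (simp add: PosRoots_def)
next
  fix \<gamma> assume g: "\<gamma> \<in> PosRoots m \<and> refl_along m \<gamma> = t"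
  obtain cs d where gc: "\<gamma> = wd m cs (sroot d)" using g by (auto simp: PosRoots_def Roots_def)
  have Bg: "Bform m \<gamma> \<gamma> = 1" using gc by (simp add: B_wd B_sroot)
  have Bb: "Bform m \<beta> \<beta> = 1" using beta by (auto simp: B_wd B_sroot B_neg1 B_neg2)
  have rr: "refl_along m \<gamma> = refl_along m \<beta>"
    using g beta t refl_of_root[of m bs b] refl_neg[of m "wd m bs (sroot b)"] by auto
  let ?l = "Bform m \<beta> \<gamma>"
  have e1: "?l *\<^sub>R \<gamma> = \<beta>"
  proof -
    have "refl_along m \<gamma> \<beta> = refl_along m \<beta> \<beta>" using rr by simp
    then have "\<beta> - (2 * Bform m \<gamma> \<beta>) *\<^sub>R \<gamma> = \<beta> - 2 *\<^sub>R \<beta>" using Bb by (simp add: refl_along_def)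
    then have "(2 * ?l) *\<^sub>R \<gamma> = 2 *\<^sub>R \<beta>" using B_sym[of m \<gamma> \<beta>] by simp
    then have "2 *\<^sub>R (?l *\<^sub>R \<gamma>) = 2 *\<^sub>R \<beta>" by (simp only: scaleR_scaleR)
    then show ?thesis by (metis scaleR_cancel_left zero_neq_numeral)
  qed
  have e2: "?l *\<^sub>R \<beta> = \<gamma>"
  proof -
    have "refl_along m \<gamma> \<gamma> = refl_along m \<beta> \<gamma>" using rr by simp
    then have "\<gamma> - 2 *\<^sub>R \<gamma> = \<gamma> - (2 * ?l) *\<^sub>R \<beta>" using Bg by (simp add: refl_along_def)
    then have "(2 * ?l) *\<^sub>R \<beta> = 2 *\<^sub>R \<gamma>" by (simp add: algebra_simps)
    then have "2 *\<^sub>R (?l *\<^sub>R \<beta>) = 2 *\<^sub>R \<gamma>" by (simp only: scaleR_scaleR)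
    then show ?thesis by (metis scaleR_cancel_left zero_neq_numeral)
  qed
  have bnz: "\<beta> \<noteq> 0" using Bb B_zero[of m 0] by auto
  have "(?l * ?l) *\<^sub>R \<beta> = \<beta>" using e1 e2 by (metis scaleR_scaleR)
  then have "(?l * ?l - 1) *\<^sub>R \<beta> = 0" by (simp add: algebra_simps)
  then have "?l * ?l = 1" using bnz by simp
  then have "?l = 1 \<or> ?l = -1" by (metis mult_cancel_left1 square_eq_1_iff)
  then show "\<gamma> = \<beta>"
  proof
    assume "?l = 1" then show ?thesis using e2 by simp
  next
    assume "?l = -1"
    then have "\<gamma> = - \<beta>" using e2 by simp
    moreover have "0 \<le> fst \<gamma>" "0 \<le> snd \<gamma>" using g by (auto simp: PosRoots_def)
    ultimately have "fst \<beta> = 0" "snd \<beta> = 0" using nn by auto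
    then have "\<beta> = 0" by (simp add: prod_eq_iff)
    then show ?thesis using bnz by simp
  qed
qed

lemma cone2: assumes "x \<in> A" "y \<in> A" "0 \<le> l" "0 \<le> u"
  shows "l *\<^sub>R x + u *\<^sub>R y \<in> Cone A"
proof (cases "x = y")
  case True
  have "l *\<^sub>R x + u *\<^sub>R y = (\<Sum>a\<in>{x}. (\<lambda>_. l + u) a *\<^sub>R a)" using True by (simp add: scaleR_add_left)
  then show ?thesis unfolding Cone_def using assms by (intro CollectI exI[of _ "{x}"] exI[of _ "\<lambda>_. l + u"]) auto
next
  case False
  let ?c = "\<lambda>z. if z = x then l else u"
  have "l *\<^sub>R x + u *\<^sub>R y = (\<Sum>a\<in>{x, y}. ?c a *\<^sub>R a)" using False by simp
  then show ?thesis unfolding Cone_def using assms by (intro CollectI exI[of _ "{x, y}"] exI[of _ ?c]) auto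
qed



lemma sw_comb: "l *\<^sub>R sw p x + u *\<^sub>R sw p y = sw p (l *\<^sub>R x + u *\<^sub>R y)"
  by (cases p) (simp_all add: sw_def)

lemma sw_nn: "0 \<le> fst z \<Longrightarrow> 0 \<le> snd z \<Longrightarrow> 0 \<le> fst (sw p z) \<and> 0 \<le> snd (sw p z)"
  by (cases p) (simp_all add: sw_def)

lemma sw_neg: "- sw p z = sw p (- z)"
  by (cases p) (simp_all add: sw_def)

theorem proposition3p7:
  fixes m :: enat and u v :: "real \<times> real \<Rightarrow> real \<times> real"
  assumes "m \<ge> 2"
    and "u \<in> Wgrp m" and "v \<in> Wgrp m"
    and "bruhat_less m u v"
  defines "R \<equiv> {root_of m t | t. t \<in> Refls m \<and> bruhat_le m u (v \<circ> t) \<and> bruhat_cover m (v \<circ> t) v}"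
    and "R' \<equiv> {root_of m t | t. t \<in> Refls m \<and> bruhat_cover m u (u \<circ> t) \<and> bruhat_le m (u \<circ> t) v}"
  shows "R \<inter> Cone R' \<noteq> {} \<and> R' \<inter> Cone R \<noteq> {}"
proof -
  have une: "u \<noteq> v" and rt: "(bruhat_step m)\<^sup>*\<^sup>* u v"
    using assms(4) by (auto simp: bruhat_less_def bruhat_le_def)
  have lt: "len m u < len m v" using rt_len[OF rt] une by auto
  show ?thesis
  proof (cases "len m v = Suc (len m u)")
    case True
    then have st: "bruhat_step m u v" using rt_one[OF rt une] by simp
    then obtain t where t: "t \<in> Refls m" "v = u \<circ> t" by (auto simp: bruhat_step_def)
    have vt: "v \<circ> t = u" using t refl_invol[OF t(1)] by (simp add: comp_assoc)
    have cov: "bruhat_cover m u v" using cover_lemma[OF assms(2,3) t True] .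
    have leu: "bruhat_le m u u" using assms(2) by (simp add: bruhat_le_def)
    have lev: "bruhat_le m v v" using assms(3) by (simp add: bruhat_le_def)
    have inR: "root_of m t \<in> R" unfolding R_def using t vt cov leu by auto
    have inR': "root_of m t \<in> R'" unfolding R'_def using t cov lev by auto
    have c1: "root_of m t \<in> Cone R'" using cone2[OF inR' inR', of 1 0] by simp
    have c2: "root_of m t \<in> Cone R" using cone2[OF inR inR, of 1 0] by simp
    show ?thesis using inR inR' c1 c2 by blast
  next
    case False
    define a where "a = len m u"
    define b where "b = len m v"
    have ab: "a + 2 \<le> b" using lt False by (simp add: a_def b_def)
    have bm: "enat b \<le> m" unfolding b_def by (rule len_bound_enat[OF assms(1,3)])
    obtain b' where b': "b = Suc b'" using ab by (cases b) auto
    obtain L where uL: "u = wd m (rev (alt L a))" using rev_form[OF assms(2)] a_def by blast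
    obtain M where vM: "v = wd m (rev (alt M b))" using rev_form[OF assms(3)] b_def by blast
    let ?A = "cheb (coxc m)"
    have b'm: "enat b' \<le> m" by (rule order_trans[OF _ bm]) (simp add: b')
    have a1m: "enat (Suc a) \<le> m" by (rule order_trans[OF _ bm]) (use ab in simp)
    have a1lt: "enat (Suc a) < m" by (rule less_le_trans[OF _ bm]) (use ab in simp)
    have am: "enat a \<le> m" by (rule order_trans[OF _ bm]) (use ab in simp)
    have b'lt: "enat b' < m" by (rule less_le_trans[OF _ bm]) (simp add: b')
    have dm: "enat (b' - a) \<le> m" by (rule order_trans[OF _ bm]) (simp add: b')
    let ?t1 = "gen m M"
    let ?E = "nxt M b'"
    have altMb: "alt M b = alt M b' @ [?E]" by (simp only: b' alt_Suc_snoc)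
    have vt1: "v \<circ> ?t1 = wd m (rev (alt (\<not> M) b'))"
      unfolding vM b' by (simp add: wd_append fun_eq_iff gen_gen)
    have lvt1: "len m (v \<circ> ?t1) = b'" unfolding vt1 by (rule len_wd_rev_alt[OF assms(1) b'm])
    have t1R: "root_of m ?t1 \<in> R"
    proof -
      have "bruhat_le m u (v \<circ> ?t1)" unfolding vt1
        by (rule F2rev[OF assms(1,2) _ b'm]) (use ab b' a_def in simp)
      moreover have "bruhat_cover m (v \<circ> ?t1) v"
      proof (rule cover_lemma[where t = "?t1"])
        show "v \<circ> ?t1 \<in> Wgrp m" unfolding vt1 by simp
        show "v \<in> Wgrp m" by (rule assms(3))
        show "?t1 \<in> Refls m" by (rule Refls_gen)
        show "v = (v \<circ> ?t1) \<circ> ?t1" by (simp add: comp_assoc gen_gen_comp)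
        show "len m v = Suc (len m (v \<circ> ?t1))" using lvt1 b' b_def by simp
      qed
      ultimately show ?thesis unfolding R_def using Refls_gen by blast
    qed
    have r1: "root_of m ?t1 = sroot M"
      by (rule root_of_eq[where bs = "[]" and b = M]) (auto simp: sroot_def)
    let ?t2 = "wd m (alt M b @ [?E] @ rev (alt M b))"
    have vt2: "v \<circ> ?t2 = wd m (rev (alt M b'))"
    proof (rule ext)
      fix z
      have "(v \<circ> ?t2) z = gen m ?E (wd m (rev (alt M b)) z)"
        unfolding vM by (simp add: wd_append wd_rev_cancel_app2)
      also have "\<dots> = wd m (rev (alt M b')) z" unfolding altMb by (simp add: wd_append gen_gen)
      finally show "(v \<circ> ?t2) z = wd m (rev (alt M b')) z" .
    qed
    have lvt2: "len m (v \<circ> ?t2) = b'" unfolding vt2 by (rule len_wd_rev_alt[OF assms(1) b'm])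
    have t2R: "root_of m ?t2 \<in> R"
    proof -
      have "bruhat_le m u (v \<circ> ?t2)" unfolding vt2
        by (rule F2rev[OF assms(1,2) _ b'm]) (use ab b' a_def in simp)
      moreover have "bruhat_cover m (v \<circ> ?t2) v"
      proof (rule cover_lemma[where t = "?t2"])
        show "v \<circ> ?t2 \<in> Wgrp m" unfolding vt2 by simp
        show "v \<in> Wgrp m" by (rule assms(3))
        show "?t2 \<in> Refls m" by (rule Refls_wd)
        show "v = (v \<circ> ?t2) \<circ> ?t2" by (simp only: comp_assoc refl_invol[OF Refls_wd] comp_id)
        show "len m v = Suc (len m (v \<circ> ?t2))" using lvt2 b' b_def by simp
      qed
      ultimately show ?thesis unfolding R_def using Refls_wd by blast
    qed
    have r2: "root_of m ?t2 = sw M (?A b, ?A b')"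
    proof (rule root_of_eq[where bs = "alt M b" and b = ?E])
      show "sw M (?A b, ?A b') = wd m (alt M b) (sroot ?E) \<or> sw M (?A b, ?A b') = - wd m (alt M b) (sroot ?E)"
        using wd_alt_last[of m M b'] b' by simp
      have "0 \<le> ?A b" "0 \<le> ?A b'" using cheb_nonneg[OF assms(1)] bm b'm by auto
      then show "0 \<le> fst (sw M (?A b, ?A b'))" "0 \<le> snd (sw M (?A b, ?A b'))" using sw_nn by auto
    qed simp
    let ?t3 = "gen m (\<not> L)"
    have ut3: "u \<circ> ?t3 = wd m (rev (alt (\<not> L) (Suc a)))"
      unfolding uL by (simp add: wd_append)
    have lut3: "len m (u \<circ> ?t3) = Suc a" unfolding ut3 by (rule len_wd_rev_alt[OF assms(1) a1m])
    have t3R: "root_of m ?t3 \<in> R'"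
    proof -
      have "bruhat_le m (u \<circ> ?t3) v" unfolding vM
        by (rule F2rev[OF assms(1)]) (use ab lut3 bm in \<open>auto simp: ut3\<close>)
      moreover have "bruhat_cover m u (u \<circ> ?t3)"
      proof (rule cover_lemma[where t = "?t3"])
        show "u \<circ> ?t3 \<in> Wgrp m" unfolding ut3 by simp
        show "u \<in> Wgrp m" by (rule assms(2))
        show "?t3 \<in> Refls m" by (rule Refls_gen)
        show "u \<circ> ?t3 = u \<circ> ?t3" ..
        show "len m (u \<circ> ?t3) = Suc (len m u)" using lut3 a_def by simp
      qed
      ultimately show ?thesis unfolding R'_def using Refls_gen by blast
    qed
    have r3: "root_of m ?t3 = sroot (\<not> L)"
      by (rule root_of_eq[where bs = "[]" and b = "\<not> L"]) (auto simp: sroot_def)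
    let ?F = "nxt L a"
    let ?t4 = "wd m (alt L a @ [?F] @ rev (alt L a))"
    have ut4: "u \<circ> ?t4 = wd m (rev (alt L (Suc a)))"
    proof (rule ext)
      fix z
      show "(u \<circ> ?t4) z = wd m (rev (alt L (Suc a))) z"
        unfolding uL by (simp only: alt_Suc_snoc) (simp add: wd_append wd_rev_cancel_app2)
    qed
    have lut4: "len m (u \<circ> ?t4) = Suc a" unfolding ut4 by (rule len_wd_rev_alt[OF assms(1) a1m])
    have t4R: "root_of m ?t4 \<in> R'"
    proof -
      have w4: "u \<circ> ?t4 \<in> Wgrp m" unfolding ut4 by simp
      have "bruhat_le m (u \<circ> ?t4) v" unfolding vM
        by (rule F2rev[OF assms(1) w4]) (use ab lut4 bm in auto)
      moreover have "bruhat_cover m u (u \<circ> ?t4)"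
      proof (rule cover_lemma[where t = "?t4"])
        show "u \<circ> ?t4 \<in> Wgrp m" unfolding ut4 by simp
        show "u \<in> Wgrp m" by (rule assms(2))
        show "?t4 \<in> Refls m" by (rule Refls_wd)
        show "u \<circ> ?t4 = u \<circ> ?t4" ..
        show "len m (u \<circ> ?t4) = Suc (len m u)" using lut4 a_def by simp
      qed
      ultimately show ?thesis unfolding R'_def using Refls_wd by blast
    qed
    have r4: "root_of m ?t4 = sw L (?A (Suc a), ?A a)"
    proof (rule root_of_eq[where bs = "alt L a" and b = ?F])
      show "sw L (?A (Suc a), ?A a) = wd m (alt L a) (sroot ?F) \<or> sw L (?A (Suc a), ?A a) = - wd m (alt L a) (sroot ?F)"
        using wd_alt_nxt[of m L a] by simp
      have "0 \<le> ?A (Suc a)" "0 \<le> ?A a" using cheb_nonneg[OF assms(1)] a1m am by auto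
      then show "0 \<le> fst (sw L (?A (Suc a), ?A a))" "0 \<le> snd (sw L (?A (Suc a), ?A a))" using sw_nn by auto
    qed simp
    show ?thesis
    proof (cases "M = L")
      case False
      then have "sroot M = sroot (\<not> L)" by (cases M; cases L) auto
      then have inR: "sroot M \<in> R" and inR': "sroot M \<in> R'" using t1R t3R r1 r3 by auto
      have c1: "sroot M \<in> Cone R'" using cone2[OF inR' inR', of 1 0] by simp
      have c2: "sroot M \<in> Cone R" using cone2[OF inR inR, of 1 0] by simp
      show ?thesis using inR inR' c1 c2 by blast
    next
      case True
      have pb': "0 < ?A b'" using cheb_pos[OF assms(1) _ b'lt] ab b' by simp
      have pa1: "0 < ?A (Suc a)" using cheb_pos[OF assms(1) _ a1lt] by simp
      have nd: "0 \<le> ?A (b' - a)" using cheb_nonneg[OF assms(1) dm] .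
      have nb: "0 \<le> ?A b" using cheb_nonneg[OF assms(1) bm] .
      have na: "0 \<le> ?A a" using cheb_nonneg[OF assms(1) am] .
      have cas: "?A (Suc a) * ?A b' - ?A a * ?A b = ?A (b' - a)"
        using cheb_cas[of "coxc m" a "b' - a"] ab b' by simp
      have x1: "sw L (?A (Suc a), ?A a) = (?A (b' - a) / ?A b') *\<^sub>R sroot M + (?A a / ?A b') *\<^sub>R sw M (?A b, ?A b')"
      proof -
        have "(?A (b' - a) / ?A b') *\<^sub>R sroot M + (?A a / ?A b') *\<^sub>R sw M (?A b, ?A b')
          = sw L ((?A (b' - a) / ?A b') *\<^sub>R (1, 0) + (?A a / ?A b') *\<^sub>R (?A b, ?A b'))"
          using True by (simp only: sroot_sw sw_comb)
        also have "(?A (b' - a) / ?A b') *\<^sub>R (1, 0) + (?A a / ?A b') *\<^sub>R (?A b, ?A b') = (?A (Suc a), ?A a)"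
          using pb' cas by (simp add: field_simps)
        finally show ?thesis by simp
      qed
      have inCR: "sw L (?A (Suc a), ?A a) \<in> Cone R"
        unfolding x1 using t1R t2R r1 r2 pb' nd na
        by (intro cone2) auto
      have x2: "sw M (?A b, ?A b') = (?A (b' - a) / ?A (Suc a)) *\<^sub>R sroot (\<not> L) + (?A b / ?A (Suc a)) *\<^sub>R sw L (?A (Suc a), ?A a)"
      proof -
        have "(?A (b' - a) / ?A (Suc a)) *\<^sub>R sroot (\<not> L) + (?A b / ?A (Suc a)) *\<^sub>R sw L (?A (Suc a), ?A a)
          = sw L ((?A (b' - a) / ?A (Suc a)) *\<^sub>R (0, 1) + (?A b / ?A (Suc a)) *\<^sub>R (?A (Suc a), ?A a))"
          by (simp only: sroot_sw(2) sw_comb)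
        also have "(?A (b' - a) / ?A (Suc a)) *\<^sub>R (0, 1) + (?A b / ?A (Suc a)) *\<^sub>R (?A (Suc a), ?A a) = (?A b, ?A b')"
          using pa1 cas by (simp add: field_simps)
        finally show ?thesis using True by simp
      qed
      have inCR': "sw M (?A b, ?A b') \<in> Cone R'"
        unfolding x2 using t3R t4R r3 r4 pa1 nd nb
        by (intro cone2) auto
      have "sw M (?A b, ?A b') \<in> R" using t2R r2 by simp
      moreover have "sw L (?A (Suc a), ?A a) \<in> R'" using t4R r4 by simp
      ultimately show ?thesis using inCR inCR' by blast
    qed
  qed
qed


end
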